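(* Let $r\geq2$ and let $\mathcal{K}$ be the class of finite $r$-uniform hypergraphs. Let $e\subseteq\mathbf{B}\in\mathcal{K}$, where $e$ is the hypergraph on $r$ vertices consisting of a single edge, and let $\mathbf{C}\in\mathcal{K}$ with $|\mathbf{C}|=N$. Then there is $\mathbf{D}\in\mathcal{K}$ extending $\mathbf{C}$ along $e\subseteq\mathbf{B}$ with $|\mathbf{D}|\leq cN^{r-1}$, where $c$ is a constant depending only on $|\mathbf{B}|$ (for the fixed $r$).
   Context: For $\mathbf{A}\subseteq\mathbf{B}$ and $\mathbf{C}\subseteq\mathbf{D}$ in $\mathcal{K}$ (induced substructures), $\mathbf{D}$ extends $\mathbf{C}$ along $\mathbf{A}\subseteq\mathbf{B}$ if $\mathbf{C}$ is a substructure of $\mathbf{D}$ and for every embedding $f:\mathbf{A}\to\mathbf{C}$ there is an embedding $h:\mathbf{B}\to\mathbf{D}$ with $h|_{\mathbf{A}}=f$. $|\mathbf{C}|$ is the number of vertices. *)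

theory Defs
  imports Complex_Main
begin

text \<open>A hypergraph is a pair (vertex set, edge set). Vertices are natural numbers
(every finite hypergraph is isomorphic to one on nat, and nat leaves room to
extend any finite structure).\<close>
type_synonym hg = "nat set \<times> nat set set"

definition verts :: "hg \<Rightarrow> nat set" where "verts H = fst H"
definition edges :: "hg \<Rightarrow> nat set set" where "edges H = snd H"

definition unif_hg :: "nat \<Rightarrow> hg \<Rightarrow> bool" where
  "unif_hg r H \<longleftrightarrow> finite (verts H) \<and> (\<forall>S\<in>edges H. S \<subseteq> verts H \<and> card S = r)"

definition embedding :: "(nat \<Rightarrow> nat) \<Rightarrow> hg \<Rightarrow> hg \<Rightarrow> bool" where
  "embedding f H1 H2 \<longleftrightarrow> f ` verts H1 \<subseteq> verts H2 \<and> inj_on f (verts H1) \<and>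
     (\<forall>S. S \<subseteq> verts H1 \<longrightarrow> (S \<in> edges H1 \<longleftrightarrow> f ` S \<in> edges H2))"

definition substructure :: "hg \<Rightarrow> hg \<Rightarrow> bool" where
  "substructure A B \<longleftrightarrow> verts A \<subseteq> verts B \<and> edges A = {S \<in> edges B. S \<subseteq> verts A}"

definition extends_along :: "hg \<Rightarrow> hg \<Rightarrow> hg \<Rightarrow> hg \<Rightarrow> bool" where
  "extends_along D C A B \<longleftrightarrow> substructure C D \<and>
     (\<forall>f. embedding f A C \<longrightarrow> (\<exists>h. embedding h B D \<and> (\<forall>x\<in>verts A. h x = f x)))"

definition single_edge :: "nat \<Rightarrow> hg \<Rightarrow> bool" where
  "single_edge r A \<longleftrightarrow> finite (verts A) \<and> card (verts A) = r \<and> edges A = {verts A}"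

end

theory Submission
  imports Defs "HOL-Library.FuncSet"
begin

lemma construction:
  fixes r :: nat and A B C :: hg
  assumes r2: "r \<ge> 2" and uB: "unif_hg r B" and sA: "single_edge r A"
    and AB: "substructure A B" and uC: "unif_hg r C"
  shows "\<exists>D. unif_hg r D \<and> extends_along D C A B \<and>
     card (verts D) \<le> card (verts C) + card (verts B) * (r * card (verts C) ^ (r - 1))"
proof -
  define VA where "VA = verts A"
  define X where "X = verts B - VA"
  define VC where "VC = verts C"
  have finB: "finite (verts B)" using uB unfolding unif_hg_def by auto
  have finC: "finite VC" using uC unfolding unif_hg_def VC_def by auto
  have VAB: "VA \<subseteq> verts B" using AB unfolding substructure_def VA_def by auto
  have finA: "finite VA" using VAB finB finite_subset by blast
  have cardA: "card VA = r" using sA unfolding single_edge_def VA_def by auto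
  have VAne: "VA \<noteq> {}" using cardA r2 by auto
  have edgesA: "edges A = {VA}" using sA unfolding single_edge_def VA_def by auto
  have edgesAB: "edges A = {S \<in> edges B. S \<subseteq> VA}" using AB unfolding substructure_def VA_def by auto
  have edgesC: "\<And>S. S \<in> edges C \<Longrightarrow> S \<subseteq> VC \<and> card S = r" using uC unfolding unif_hg_def VC_def by auto
  have edgesB: "\<And>S. S \<in> edges B \<Longrightarrow> S \<subseteq> verts B \<and> card S = r" using uB unfolding unif_hg_def by auto
  define M where "M = Suc (Max (insert 0 VC))"
  have MC: "\<And>x. x \<in> VC \<Longrightarrow> x < M" unfolding M_def using finC
    by (simp add: le_imp_less_Suc)
  define K where "K = {(a, restrict f (VA - {a})) | a f. a \<in> VA \<and> embedding f A C}"
  have Ksub: "K \<subseteq> Sigma VA (\<lambda>a. PiE (VA - {a}) (\<lambda>_. VC))"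
  proof
    fix k assume "k \<in> K"
    then obtain a f where k: "k = (a, restrict f (VA - {a}))" "a \<in> VA" "f ` VA \<subseteq> VC"
      unfolding K_def embedding_def VA_def VC_def by auto
    have "restrict f (VA - {a}) \<in> PiE (VA - {a}) (\<lambda>_. VC)"
      using k(3) by (intro restrict_PiE_iff[THEN iffD2]) auto
    then show "k \<in> Sigma VA (\<lambda>a. PiE (VA - {a}) (\<lambda>_. VC))" using k by auto
  qed
  have finK: "finite K"
    by (rule finite_subset[OF Ksub]) (use finA finC in \<open>auto intro!: finite_PiE\<close>)
  have cardK: "card K \<le> r * card VC ^ (r - 1)"
  proof -
    have "card K \<le> card (Sigma VA (\<lambda>a. PiE (VA - {a}) (\<lambda>_. VC)))"
      using finA finC Ksub by (intro card_mono) (auto intro!: finite_PiE)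
    also have "\<dots> = (\<Sum>a\<in>VA. card (PiE (VA - {a}) (\<lambda>_. VC)))"
      using finA finC by (simp add: finite_PiE)
    also have "\<dots> = (\<Sum>a\<in>VA. card VC ^ (r - 1))"
      by (rule sum.cong) (use finA cardA in \<open>auto simp: card_PiE\<close>)
    also have "\<dots> = r * card VC ^ (r - 1)" using cardA by simp
    finally show ?thesis .
  qed
  have Kprop: "\<And>k. k \<in> K \<Longrightarrow> fst k \<in> VA \<and> inj_on (snd k) (VA - {fst k}) \<and> snd k ` (VA - {fst k}) \<subseteq> VC"
  proof -
    fix k assume "k \<in> K"
    then obtain a f where k: "k = (a, restrict f (VA - {a}))" "a \<in> VA" "embedding f A C"
      unfolding K_def by auto
    then have "inj_on f VA" "f ` VA \<subseteq> VC" unfolding embedding_def VA_def VC_def by auto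
    then show "fst k \<in> VA \<and> inj_on (snd k) (VA - {fst k}) \<and> snd k ` (VA - {fst k}) \<subseteq> VC"
      using k by (auto simp: inj_on_def)
  qed
  have finKX: "finite (K \<times> X)" using finK finB X_def by auto
  obtain e :: "((nat \<times> (nat \<Rightarrow> nat)) \<times> nat) \<Rightarrow> nat" where e: "inj_on e (K \<times> X)"
    using finite_imp_inj_to_nat_seg[OF finKX] by metis
  define enc where "enc p = M + e p" for p
  have enc_inj: "inj_on enc (K \<times> X)" using e unfolding enc_def inj_on_def by auto
  have enc_notC: "\<And>p. enc p \<notin> VC" using MC unfolding enc_def by force
  define H where "H k v y = (if y \<in> VA then (if y = fst k then v else snd k y) else enc (k, y))" for k v y
  define NE where "NE = {H k v ` S | k v S. k \<in> K \<and> v \<in> VC \<and> v \<notin> snd k ` (VA - {fst k}) \<and> S \<in> edges B \<and> \<not> S \<subseteq> VA}"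
  define D where "D = (VC \<union> enc ` (K \<times> X), edges C \<union> NE)"
  have vD: "verts D = VC \<union> enc ` (K \<times> X)" unfolding D_def verts_def by simp
  have eD: "edges D = edges C \<union> NE" unfolding D_def edges_def by simp
  have HA: "\<And>k v y. k \<in> K \<Longrightarrow> v \<in> VC \<Longrightarrow> y \<in> VA \<Longrightarrow> H k v y \<in> VC"
    unfolding H_def using Kprop by auto
  have HX: "\<And>k v y. y \<notin> VA \<Longrightarrow> H k v y = enc (k, y)"
    unfolding H_def by auto
  have HD: "\<And>k v y. k \<in> K \<Longrightarrow> v \<in> VC \<Longrightarrow> y \<in> verts B \<Longrightarrow> H k v y \<in> verts D"
  proof -
    fix k v y assume "k \<in> K" "v \<in> VC" "y \<in> verts B"
    then show "H k v y \<in> verts D"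
      using HA[of k v y] HX[of y k v] unfolding vD X_def by (cases "y \<in> VA") auto
  qed
  have Hinj: "\<And>k v v' y z. k \<in> K \<Longrightarrow> v \<in> VC \<Longrightarrow> v' \<in> VC \<Longrightarrow> v \<notin> snd k ` (VA - {fst k}) \<Longrightarrow> v' \<notin> snd k ` (VA - {fst k})
      \<Longrightarrow> y \<in> verts B \<Longrightarrow> z \<in> verts B \<Longrightarrow> H k v y = H k v' z \<Longrightarrow> y = z"
  proof -
    fix k v v' y z assume k: "k \<in> K" and vC: "v \<in> VC" and vC': "v' \<in> VC" and v: "v \<notin> snd k ` (VA - {fst k})" and v': "v' \<notin> snd k ` (VA - {fst k})"
      and y: "y \<in> verts B" and z: "z \<in> verts B" and eq: "H k v y = H k v' z"
    note kp = Kprop[OF k]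
    show "y = z"
    proof (cases "y \<in> VA")
      case yA: True
      show ?thesis
      proof (cases "z \<in> VA")
        case zA: True
        then show ?thesis using yA eq v v' kp unfolding H_def
          by (auto split: if_splits simp: inj_on_def)
      next
        case zX: False
        have "H k v' z \<notin> VC" using zX HX enc_notC by simp
        moreover have "H k v y \<in> VC" using HA k vC yA by simp
        ultimately show ?thesis using eq by simp
      qed
    next
      case yX: False
      show ?thesis
      proof (cases "z \<in> VA")
        case zA: True
        have "H k v y \<notin> VC" using yX HX enc_notC by simp
        moreover have "H k v' z \<in> VC" using HA k vC' zA by simp
        ultimately show ?thesis using eq by simp
      next
        case zX: False
        have "enc (k, y) = enc (k, z)" using eq yX zX HX by simp
        then show ?thesis using enc_inj k y z yX zX unfolding X_def inj_on_def by auto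
      qed
    qed
  qed
  have Hkey: "\<And>k k' v v' y z. k \<in> K \<Longrightarrow> k' \<in> K \<Longrightarrow> v' \<in> VC \<Longrightarrow> y \<in> verts B \<Longrightarrow> y \<notin> VA
      \<Longrightarrow> z \<in> verts B \<Longrightarrow> H k v y = H k' v' z \<Longrightarrow> k = k' \<and> z = y"
  proof -
    fix k k' v v' y z assume k: "k \<in> K" and k': "k' \<in> K" and v': "v' \<in> VC" and y: "y \<in> verts B" "y \<notin> VA"
      and z: "z \<in> verts B" and eq: "H k v y = H k' v' z"
    have zX: "z \<notin> VA"
    proof
      assume "z \<in> VA" then have "H k' v' z \<in> VC" using HA k' v' by auto
      then show False using eq HX[OF y(2), of k v] enc_notC[of "(k, y)"] by simp
    qed
    have "enc (k, y) = enc (k', z)" using eq HX y(2) zX by simp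
    then show "k = k' \<and> z = y" using enc_inj k k' y z zX unfolding X_def inj_on_def by auto
  qed
  have NEnotC: "\<And>T. T \<in> NE \<Longrightarrow> \<not> T \<subseteq> VC"
  proof
    fix T assume "T \<in> NE" "T \<subseteq> VC"
    then obtain k v S where T: "T = H k v ` S" "S \<in> edges B" "\<not> S \<subseteq> VA" unfolding NE_def by blast
    then obtain y where y: "y \<in> S" "y \<notin> VA" by auto
    then have "H k v y \<in> T" using T(1) by blast
    then have "enc (k, y) \<in> T" using HX[OF y(2), of k v] by simp
    then show False using \<open>T \<subseteq> VC\<close> enc_notC[of "(k, y)"] by blast
  qed
  have unifD: "unif_hg r D"
    unfolding unif_hg_def
  proof (rule conjI)
    show "finite (verts D)" unfolding vD using finC finKX by simp
  next
    show "\<forall>S\<in>edges D. S \<subseteq> verts D \<and> card S = r"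
    proof
    fix S assume "S \<in> edges D"
    then consider "S \<in> edges C" | "S \<in> NE" unfolding eD by auto
    then show "S \<subseteq> verts D \<and> card S = r"
    proof cases
      case 1 then show ?thesis using edgesC vD by auto
    next
      case 2
      then obtain k v T where T: "S = H k v ` T" "k \<in> K" "v \<in> VC" "v \<notin> snd k ` (VA - {fst k})"
        "T \<in> edges B" unfolding NE_def by blast
      have Tsub: "T \<subseteq> verts B" "card T = r" using edgesB[OF T(5)] by auto
      have "inj_on (H k v) T"
        using Hinj[OF T(2) T(3) T(3) T(4) T(4)] Tsub unfolding inj_on_def by blast
      then have "card S = r" using T(1) Tsub card_image by metis
      moreover have "S \<subseteq> verts D" using T(1) Tsub HD[OF T(2) T(3)] by blast
      ultimately show ?thesis by simp
    qed
    qed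
  qed
  have subCD: "substructure C D"
    unfolding substructure_def
  proof
    show "verts C \<subseteq> verts D" using vD VC_def by auto
    show "edges C = {S \<in> edges D. S \<subseteq> verts C}"
      using edgesC NEnotC unfolding eD VC_def by auto
  qed
  have ext: "\<forall>f. embedding f A C \<longrightarrow> (\<exists>h. embedding h B D \<and> (\<forall>x\<in>verts A. h x = f x))"
  proof (intro allI impI)
    fix f assume f: "embedding f A C"
    then have finj: "inj_on f VA" and fC: "f ` VA \<subseteq> VC"
      and fe: "\<And>S. S \<subseteq> VA \<Longrightarrow> S \<in> edges A \<longleftrightarrow> f ` S \<in> edges C"
      unfolding embedding_def VA_def VC_def by auto
    obtain a where a: "a \<in> VA" using VAne by auto
    define k where "k = (a, restrict f (VA - {a}))"
    have k: "k \<in> K" unfolding K_def k_def using a f by auto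
    define v where "v = f a"
    have vC: "v \<in> VC" using fC a v_def by auto
    have vn: "v \<notin> snd k ` (VA - {fst k})"
      using finj a unfolding k_def v_def inj_on_def by auto
    define h where "h = H k v"
    have hA: "\<And>x. x \<in> VA \<Longrightarrow> h x = f x" unfolding h_def H_def k_def v_def by auto
    have hS: "\<And>S. S \<subseteq> VA \<Longrightarrow> h ` S = f ` S" using hA by (intro image_cong) auto
    have emb: "embedding h B D"
      unfolding embedding_def
    proof (intro conjI allI impI)
      show "h ` verts B \<subseteq> verts D" using HD[OF k vC] h_def by auto
      show "inj_on h (verts B)" using Hinj[OF k vC vC vn vn] unfolding h_def inj_on_def by blast
    next
      fix S assume SB: "S \<subseteq> verts B"
      show "S \<in> edges B \<longleftrightarrow> h ` S \<in> edges D"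
      proof
        assume Se: "S \<in> edges B"
        show "h ` S \<in> edges D"
        proof (cases "S \<subseteq> VA")
          case True
          then have "S \<in> edges A" using edgesAB Se by auto
          then have "f ` S \<in> edges C" using fe True by auto
          then show ?thesis using hS True eD by auto
        next
          case False
          then have "h ` S \<in> NE" unfolding NE_def h_def using k vC vn Se by blast
          then show ?thesis using eD by auto
        qed
      next
        assume he: "h ` S \<in> edges D"
        show "S \<in> edges B"
        proof (cases "S \<subseteq> VA")
          case True
          have "h ` S = f ` S" by (rule hS[OF True])
          also have "\<dots> \<subseteq> f ` VA" by (rule image_mono[OF True])
          also have "\<dots> \<subseteq> VC" by (rule fC)
          finally have hsub: "h ` S \<subseteq> VC" .
          have "h ` S \<notin> NE" using NEnotC hsub by blast
          then have "h ` S \<in> edges C" using he eD by blast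
          then have "f ` S \<in> edges C" using hS[OF True] by simp
          then have "S \<in> edges A" using fe[OF True] by blast
          then show ?thesis using edgesAB by blast
        next
          case False
          then obtain y where y: "y \<in> S" "y \<notin> VA" by blast
          have "h y \<notin> VC" unfolding h_def using HX[OF y(2), of k v] enc_notC[of "(k, y)"] by simp
          then have "\<not> h ` S \<subseteq> VC" using y(1) by blast
          then have "h ` S \<notin> edges C" using edgesC by blast
          then have "h ` S \<in> NE" using he eD by blast
          then obtain k' v' T where T: "h ` S = H k' v' ` T" "k' \<in> K" "v' \<in> VC"
            "v' \<notin> snd k' ` (VA - {fst k'})" "T \<in> edges B" unfolding NE_def by blast
          have TB: "T \<subseteq> verts B" using edgesB T(5) by blast
          have "h y \<in> H k' v' ` T" using T(1) y(1) by blast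
          then obtain z where z: "z \<in> T" "H k v y = H k' v' z" unfolding h_def by blast
          have kk: "k = k'"
            using Hkey[OF k T(2) T(3) subsetD[OF SB y(1)] y(2) subsetD[OF TB z(1)] z(2)] by blast
          have vn': "v' \<notin> snd k ` (VA - {fst k})" using T(4) kk by simp
          have eqS: "H k v ` S = H k v' ` T" using T(1) kk h_def by simp
          have "S = T"
          proof
            show "S \<subseteq> T"
            proof
              fix s assume s: "s \<in> S"
              then have "H k v s \<in> H k v' ` T" using eqS by blast
              then obtain t where t: "t \<in> T" "H k v s = H k v' t" by blast
              have "s = t" by (rule Hinj[OF k vC T(3) vn vn' subsetD[OF SB s] subsetD[OF TB t(1)] t(2)])
              then show "s \<in> T" using t(1) by simp
            qed
            show "T \<subseteq> S"
            proof
              fix t assume t: "t \<in> T"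
              then have "H k v' t \<in> H k v ` S" using eqS by blast
              then obtain s where s: "s \<in> S" "H k v' t = H k v s" by blast
              have "t = s" by (rule Hinj[OF k T(3) vC vn' vn subsetD[OF TB t] subsetD[OF SB s(1)] s(2)])
              then show "t \<in> S" using s(1) by simp
            qed
          qed
          then show ?thesis using T(5) by simp
        qed
      qed
    qed
    show "\<exists>h. embedding h B D \<and> (\<forall>x\<in>verts A. h x = f x)"
      using emb hA unfolding VA_def by blast
  qed
  have cardD: "card (verts D) \<le> card (verts C) + card (verts B) * (r * card (verts C) ^ (r - 1))"
  proof -
    have "card (verts D) \<le> card VC + card (enc ` (K \<times> X))"
      unfolding vD by (rule card_Un_le)
    also have "card (enc ` (K \<times> X)) \<le> card (K \<times> X)" using finKX card_image_le by blast
    also have "card (K \<times> X) = card K * card X" by (simp add: card_cartesian_product)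
    also have "\<dots> \<le> (r * card VC ^ (r - 1)) * card (verts B)"
      using cardK card_mono[OF finB, of X] X_def by (intro mult_mono) auto
    finally show ?thesis unfolding VC_def by (simp add: mult.commute)
  qed
  show ?thesis
  proof (intro exI[of _ D] conjI)
    show "extends_along D C A B" unfolding extends_along_def using subCD ext by (intro conjI)
  qed (use unifD cardD in simp_all)
qed

theorem mainTheorem19:
  fixes r b :: nat
  assumes "r \<ge> 2"
  shows "\<exists>c::real. \<forall>A B C.
    unif_hg r B \<and> card (verts B) = b \<and> single_edge r A \<and> substructure A B \<and> unif_hg r C
    \<longrightarrow> (\<exists>D. unif_hg r D \<and> extends_along D C A B \<and>
              real (card (verts D)) \<le> c * real (card (verts C)) ^ (r - 1))"
proof (rule exI[of _ "1 + real b * real r"], intro allI impI)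
  fix A B C assume h: "unif_hg r B \<and> card (verts B) = b \<and> single_edge r A \<and> substructure A B \<and> unif_hg r C"
  then obtain D where D: "unif_hg r D" "extends_along D C A B"
    "card (verts D) \<le> card (verts C) + b * (r * card (verts C) ^ (r - 1))"
    using construction[OF assms] by blast
  define N where "N = card (verts C)"
  have "N \<le> N ^ (r - 1)"
  proof (cases "N = 0")
    case False
    then show ?thesis using assms by (simp add: self_le_power)
  qed simp
  then have "card (verts D) \<le> (1 + b * r) * N ^ (r - 1)"
    using D(3) unfolding N_def[symmetric] by (simp add: algebra_simps)
  then have "real (card (verts D)) \<le> real ((1 + b * r) * N ^ (r - 1))"
    by (rule of_nat_mono)
  then have bound: "real (card (verts D)) \<le> (1 + real b * real r) * real N ^ (r - 1)"
    by (simp add: algebra_simps)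
  then show "\<exists>D. unif_hg r D \<and> extends_along D C A B \<and>
              real (card (verts D)) \<le> (1 + real b * real r) * real (card (verts C)) ^ (r - 1)"
    using D(1) D(2) bound unfolding N_def by blast
qed

end
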